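(* Let $X$ be a non-empty set and let $E$ be any maximal right pre-reduced subset of $E(T_X^0)$, regarded as a subset of $TRel_X^0$. Then $TRel_X^0$ is an inductive left $E$-monoid, integral with $0\in E$, and $(Rel_X,\circledast,D)\cong Rest_0(E,TRel_X^0)$ as unary semigroups.
   Context: Relations are composed left to right: for binary relations $\rho,\tau$ on $X$, $\rho\tau=\{(x,y)\mid \exists z: (x,z)\in\rho,(z,y)\in\tau\}$. $Rel_X$ is the set of binary relations on $X$; $\mathrm{dom}(\rho)=\{x\mid \exists y:(x,y)\in\rho\}$. Demonic composition is $\rho\circledast\tau=\{(x,y)\in\rho\tau\mid \text{for all } z\in X,\ (x,z)\in\rho\Rightarrow z\in\mathrm{dom}(\tau)\}$, and $D(\rho)$ is the identity relation on $\mathrm{dom}(\rho)$; $(Rel_X,\circledast,D)$ is a left restriction monoid. $TRel_X$ is the set of left total relations ($\mathrm{dom}(\rho)=X$), a monoid under (ordinary = demonic) composition containing $T_X$ (total functions $X\to X$) as a submonoid; $T_X^0$ and $TRel_X^0$ denote these with a new zero element $0$ adjoined, so $T_X^0\subseteq TRel_X^0$. For a semigroup $S$, $E(S)$ is its set of idempotents; for $e,f\in E(S)$, $e\le_r f$ iff $e=ef$, and $e\sim_r f$ iff $e\le_r f$ and $f\le_r e$. $E\subseteq E(S)$ is right pre-reduced if $e=ef$ and $f=fe$ imply $e=f$ for $e,f\in E$, and maximal right pre-reduced if it contains exactly one element of each $\sim_r$-class of $E(S)$. A monoid with zero is integral if $st=0$ implies $s=0$ or $t=0$. Let $S$ be a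 monoid and $1\in E\subseteq E(S)$. $S$ is an inductive left $E$-monoid if $E$ is right pre-reduced, $(E,\le_r)$ is a meet-semilattice with meet $\wedge$, and (I1') for all $t\in S$, $e\in E$ there is $t\cdot e\in E$ such that for all $s\in S$: $ste=st$ iff $s(t\cdot e)=s$; (I2') for $s\in S$, $e,f\in E$: $se=sf=s$ implies $s(e\wedge f)=s$. If $S$ is also integral with zero and $0\in E$, $Rest_0(E,S)$ is the set $\{(e,s)\in E\times S\mid es=s,\ s=0\Rightarrow e=0\}$ with multiplication $(e,s)(f,t)=(e\wedge(s\cdot f),(e\wedge(s\cdot f))st)$ and $D((e,s))=(e,e)$. *)

theory Defs
  imports Main
begin

definition idems :: "'s set \<Rightarrow> ('s \<Rightarrow> 's \<Rightarrow> 's) \<Rightarrow> 's set" where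
  "idems S m = {e \<in> S. m e e = e}"

definition le_r :: "('s \<Rightarrow> 's \<Rightarrow> 's) \<Rightarrow> 's \<Rightarrow> 's \<Rightarrow> bool" where
  "le_r m e f \<longleftrightarrow> e = m e f"

definition sim_r :: "('s \<Rightarrow> 's \<Rightarrow> 's) \<Rightarrow> 's \<Rightarrow> 's \<Rightarrow> bool" where
  "sim_r m e f \<longleftrightarrow> le_r m e f \<and> le_r m f e"

definition right_pre_reduced :: "('s \<Rightarrow> 's \<Rightarrow> 's) \<Rightarrow> 's set \<Rightarrow> bool" where
  "right_pre_reduced m E \<longleftrightarrow>
     (\<forall>e\<in>E. \<forall>f\<in>E. e = m e f \<and> f = m f e \<longrightarrow> e = f)"

definition max_right_pre_reduced :: "'s set \<Rightarrow> ('s \<Rightarrow> 's \<Rightarrow> 's) \<Rightarrow> 's set \<Rightarrow> bool" where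
  "max_right_pre_reduced S m E \<longleftrightarrow>
     E \<subseteq> idems S m \<and> (\<forall>e\<in>idems S m. \<exists>!f. f \<in> E \<and> sim_r m e f)"

definition is_monoid :: "'s set \<Rightarrow> ('s \<Rightarrow> 's \<Rightarrow> 's) \<Rightarrow> 's \<Rightarrow> bool" where
  "is_monoid S m u \<longleftrightarrow> u \<in> S \<and> (\<forall>a\<in>S. \<forall>b\<in>S. m a b \<in> S)
     \<and> (\<forall>a\<in>S. \<forall>b\<in>S. \<forall>c\<in>S. m (m a b) c = m a (m b c))
     \<and> (\<forall>a\<in>S. m u a = a \<and> m a u = a)"

definition is_meet :: "('s \<Rightarrow> 's \<Rightarrow> 's) \<Rightarrow> 's set \<Rightarrow> 's \<Rightarrow> 's \<Rightarrow> 's \<Rightarrow> bool" where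
  "is_meet m E e f g \<longleftrightarrow> g \<in> E \<and> le_r m g e \<and> le_r m g f \<and>
     (\<forall>h\<in>E. le_r m h e \<and> le_r m h f \<longrightarrow> le_r m h g)"

definition meet :: "('s \<Rightarrow> 's \<Rightarrow> 's) \<Rightarrow> 's set \<Rightarrow> 's \<Rightarrow> 's \<Rightarrow> 's" where
  "meet m E e f = (THE g. is_meet m E e f g)"

definition dot_cond :: "'s set \<Rightarrow> ('s \<Rightarrow> 's \<Rightarrow> 's) \<Rightarrow> 's set \<Rightarrow> 's \<Rightarrow> 's \<Rightarrow> 's \<Rightarrow> bool" where
  "dot_cond S m E t e g \<longleftrightarrow> g \<in> E \<and> (\<forall>s\<in>S. m (m s t) e = m s t \<longleftrightarrow> m s g = s)"

definition dot :: "'s set \<Rightarrow> ('s \<Rightarrow> 's \<Rightarrow> 's) \<Rightarrow> 's set \<Rightarrow> 's \<Rightarrow> 's \<Rightarrow> 's" where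
  "dot S m E t e = (THE g. dot_cond S m E t e g)"

definition inductive_left_E_monoid ::
  "'s set \<Rightarrow> ('s \<Rightarrow> 's \<Rightarrow> 's) \<Rightarrow> 's \<Rightarrow> 's set \<Rightarrow> bool" where
  "inductive_left_E_monoid S m u E \<longleftrightarrow>
     is_monoid S m u \<and> u \<in> E \<and> E \<subseteq> idems S m \<and>
     right_pre_reduced m E \<and>
     (\<forall>e\<in>E. \<forall>f\<in>E. \<exists>g. is_meet m E e f g) \<and>
     (\<forall>t\<in>S. \<forall>e\<in>E. \<exists>g. dot_cond S m E t e g) \<and>
     (\<forall>s\<in>S. \<forall>e\<in>E. \<forall>f\<in>E. m s e = s \<and> m s f = s \<longrightarrow> m s (meet m E e f) = s)"

definition integral_with_zero :: "'s set \<Rightarrow> ('s \<Rightarrow> 's \<Rightarrow> 's) \<Rightarrow> 's \<Rightarrow> bool" where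
  "integral_with_zero S m z \<longleftrightarrow> z \<in> S \<and> (\<forall>s\<in>S. m z s = z \<and> m s z = z) \<and>
     (\<forall>s\<in>S. \<forall>t\<in>S. m s t = z \<longrightarrow> s = z \<or> t = z)"

definition rest0 :: "'s set \<Rightarrow> ('s \<Rightarrow> 's \<Rightarrow> 's) \<Rightarrow> 's set \<Rightarrow> 's \<Rightarrow> ('s \<times> 's) set" where
  "rest0 S m E z = {(e, s). e \<in> E \<and> s \<in> S \<and> m e s = s \<and> (s = z \<longrightarrow> e = z)}"

definition rest0_mult :: "'s set \<Rightarrow> ('s \<Rightarrow> 's \<Rightarrow> 's) \<Rightarrow> 's set \<Rightarrow> 's \<times> 's \<Rightarrow> 's \<times> 's \<Rightarrow> 's \<times> 's" where
  "rest0_mult S m E p q =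
     (let g = meet m E (fst p) (dot S m E (snd p) (fst q)) in (g, m (m g (snd p)) (snd q)))"

definition rest0_D :: "'s \<times> 's \<Rightarrow> 's \<times> 's" where
  "rest0_D p = (fst p, fst p)"

section \<open>Relations on a type 'a (X = UNIV :: 'a set)\<close>

definition demonic :: "'a rel \<Rightarrow> 'a rel \<Rightarrow> 'a rel" where
  "demonic \<rho> \<tau> = {(x, y). (x, y) \<in> \<rho> O \<tau> \<and> (\<forall>z. (x, z) \<in> \<rho> \<longrightarrow> z \<in> Domain \<tau>)}"

definition Dom_id :: "'a rel \<Rightarrow> 'a rel" where
  "Dom_id \<rho> = Id_on (Domain \<rho>)"

text \<open>Monoids with adjoined zero: None is the new zero 0.\<close>
fun mult0 :: "'a rel option \<Rightarrow> 'a rel option \<Rightarrow> 'a rel option" where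
  "mult0 (Some a) (Some b) = Some (a O b)"
| "mult0 _ _ = None"

definition graph :: "('a \<Rightarrow> 'a) \<Rightarrow> 'a rel" where
  "graph f = {(x, f x) | x. True}"

definition TX0 :: "'a rel option set" where
  "TX0 = insert None (Some ` (graph ` UNIV))"

definition TRelX0 :: "'a rel option set" where
  "TRelX0 = insert None (Some ` {\<rho>. Domain \<rho> = UNIV})"

end

theory Submission imports Defs begin

lemma graph_mem[simp]: "(x,y) \<in> graph f \<longleftrightarrow> y = f x"
  by (auto simp: graph_def)

lemma O_graph_mem[simp]: "(x,y) \<in> graph f O r \<longleftrightarrow> (f x, y) \<in> r"
  by auto

lemma graph_O_graph: "graph f O graph g = graph (g \<circ> f)"
  by auto

lemma graph_inj: "graph f = graph g \<Longrightarrow> f = g"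
  by (metis graph_mem set_eq_iff ext)

lemma Domain_graph[simp]: "Domain (graph f) = UNIV" by auto
lemma Range_graph[simp]: "Range (graph f) = range f" by auto

lemma le_r_None_left[simp]: "le_r mult0 None x" by (simp add: le_r_def)
lemma le_r_None_right[simp]: "le_r mult0 (Some a) None \<longleftrightarrow> False" by (simp add: le_r_def)
lemma le_r_Some: "le_r mult0 (Some a) (Some b) \<longleftrightarrow> a = a O b" by (simp add: le_r_def)

lemma meet_unique:
  assumes "right_pre_reduced m E" "is_meet m E e f g"
  shows "meet m E e f = g"
  unfolding meet_def
proof (rule the_equality)
  show "is_meet m E e f g" by fact
  fix g' assume "is_meet m E e f g'"
  with assms show "g' = g" unfolding is_meet_def right_pre_reduced_def le_r_def by metis
qed

lemma dot_unique:
  assumes "right_pre_reduced m E" "E \<subseteq> idems S m" "dot_cond S m E t e g"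
  shows "dot S m E t e = g"
  unfolding dot_def
proof (rule the_equality)
  show "dot_cond S m E t e g" by fact
  fix g' assume g': "dot_cond S m E t e g'"
  have gE: "g \<in> E" "g' \<in> E" using assms(3) g' by (auto simp: dot_cond_def)
  hence gS: "g \<in> S" "g' \<in> S" "m g g = g" "m g' g' = g'" using assms(2) by (auto simp: idems_def)
  have "m g g' = g" using assms(3) g' gS unfolding dot_cond_def by metis
  moreover have "m g' g = g'" using assms(3) g' gS unfolding dot_cond_def by metis
  ultimately show "g' = g" using assms(1) gE unfolding right_pre_reduced_def by metis
qed

lemma O_graph_fix:
  assumes "\<And>x. f x \<in> A" "\<And>x. x \<in> A \<Longrightarrow> f x = x"
  shows "r O graph f = r \<longleftrightarrow> Range r \<subseteq> A"
proof
  assume "r O graph f = r"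
  then show "Range r \<subseteq> A" using assms(1) by (auto, metis (no_types, lifting) relcomp.cases graph_mem)
next
  assume "Range r \<subseteq> A"
  then show "r O graph f = r" using assms by (auto, force)
qed

locale EL =
  fixes E :: "'a rel option set" and ef :: "'a set \<Rightarrow> 'a \<Rightarrow> 'a"
  assumes E0: "None \<in> E"
    and EP: "A \<noteq> {} \<Longrightarrow> Some (graph (ef A)) \<in> E"
    and efin: "A \<noteq> {} \<Longrightarrow> ef A x \<in> A"
    and effix: "A \<noteq> {} \<Longrightarrow> x \<in> A \<Longrightarrow> ef A x = x"
    and Ecases: "u \<in> E \<Longrightarrow> u = None \<or> (\<exists>A. A \<noteq> {} \<and> u = Some (graph (ef A)))"
begin

definition P where "P A = Some (graph (ef A))"

lemma P_eq: "A \<noteq> {} \<Longrightarrow> B \<noteq> {} \<Longrightarrow> P A = P B \<longleftrightarrow> A = B"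
proof
  assume ne: "A \<noteq> {}" "B \<noteq> {}" and "P A = P B"
  hence "ef A = ef B" by (auto simp: P_def dest: graph_inj)
  thus "A = B" using ne efin effix by (metis subsetI subset_antisym)
qed simp

lemma range_ef: "A \<noteq> {} \<Longrightarrow> range (ef A) = A"
proof
  assume "A \<noteq> {}" thus "range (ef A) \<subseteq> A" using efin by auto
next
  assume "A \<noteq> {}" thus "A \<subseteq> range (ef A)" using effix by (metis image_eqI rangeI subsetI)
qed

lemma le_r_P: "A \<noteq> {} \<Longrightarrow> B \<noteq> {} \<Longrightarrow> le_r mult0 (P A) (P B) \<longleftrightarrow> A \<subseteq> B"
  unfolding P_def le_r_Some
  by (subst eq_commute, subst O_graph_fix[of "ef B" B]) (auto simp: efin effix range_ef)

lemma E_cases2: "x \<in> E \<Longrightarrow> (x = None \<Longrightarrow> Q) \<Longrightarrow> (\<And>A. A \<noteq> {} \<Longrightarrow> x = P A \<Longrightarrow> Q) \<Longrightarrow> Q"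
  using Ecases P_def by metis

lemma PE: "A \<noteq> {} \<Longrightarrow> P A \<in> E" using EP P_def by simp

lemma P_UNIV: "P UNIV = Some Id"
proof -
  have "ef UNIV = id" using effix by auto
  thus ?thesis by (auto simp: P_def)
qed

lemma rpr: "right_pre_reduced mult0 E"
  unfolding right_pre_reduced_def
proof (intro ballI impI)
  fix e f assume e: "e \<in> E" and f: "f \<in> E" and h: "e = mult0 e f \<and> f = mult0 f e"
  hence l: "le_r mult0 e f" "le_r mult0 f e" by (auto simp: le_r_def)
  show "e = f"
  proof (rule E_cases2[OF e]; rule E_cases2[OF f])
    fix A B assume "A \<noteq> {}" "e = P A" "B \<noteq> {}" "f = P B"
    thus "e = f" using l le_r_P by auto
  qed (use l in \<open>auto simp: P_def\<close>)
qed


lemma rest_le_None: "h \<in> E \<Longrightarrow> le_r mult0 h None \<Longrightarrow> h = None"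
  by (erule E_cases2) (auto simp: P_def)

lemma is_meet_None1: "f \<in> E \<Longrightarrow> is_meet mult0 E None f None"
  unfolding is_meet_def using E0 rest_le_None by auto

lemma is_meet_None2: "e \<in> E \<Longrightarrow> is_meet mult0 E e None None"
  unfolding is_meet_def using E0 rest_le_None by auto

lemma is_meet_PP:
  assumes "A \<noteq> {}" "B \<noteq> {}"
  shows "is_meet mult0 E (P A) (P B) (if A \<inter> B = {} then None else P (A \<inter> B))"
proof (cases "A \<inter> B = {}")
  case True
  show ?thesis unfolding is_meet_def
  proof (simp add: True E0, intro ballI impI)
    fix h assume h: "h \<in> E" "le_r mult0 h (P A) \<and> le_r mult0 h (P B)"
    show "le_r mult0 h None"
    proof (rule E_cases2[OF h(1)])
      fix C assume "C \<noteq> {}" "h = P C"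
      thus ?thesis using h assms True le_r_P by auto
    qed simp
  qed
next
  case False
  show ?thesis unfolding is_meet_def
  proof (simp add: False PE le_r_P assms, intro ballI impI)
    fix h assume h: "h \<in> E" "le_r mult0 h (P A) \<and> le_r mult0 h (P B)"
    show "le_r mult0 h (P (A \<inter> B))"
    proof (rule E_cases2[OF h(1)])
      fix C assume "C \<noteq> {}" "h = P C"
      thus ?thesis using h assms False le_r_P by auto
    qed simp
  qed
qed

lemma meet_None1: "f \<in> E \<Longrightarrow> meet mult0 E None f = None"
  using meet_unique[OF rpr is_meet_None1] .
lemma meet_None2: "e \<in> E \<Longrightarrow> meet mult0 E e None = None"
  using meet_unique[OF rpr is_meet_None2] .
lemma meet_PP: "A \<noteq> {} \<Longrightarrow> B \<noteq> {} \<Longrightarrow>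
   meet mult0 E (P A) (P B) = (if A \<inter> B = {} then None else P (A \<inter> B))"
  using meet_unique[OF rpr is_meet_PP] .

lemma meets_exist: assumes e: "e \<in> E" and f: "f \<in> E" shows "\<exists>g. is_meet mult0 E e f g"
proof (rule E_cases2[OF e])
  assume "e = None" thus ?thesis using is_meet_None1[OF f] by blast
next
  fix A assume A: "A \<noteq> {}" "e = P A"
  show ?thesis
  proof (rule E_cases2[OF f])
    assume "f = None" thus ?thesis using is_meet_None2[OF e] by blast
  next
    fix B assume "B \<noteq> {}" "f = P B" thus ?thesis using A is_meet_PP by blast
  qed
qed

lemma TRel_iff: "s \<in> TRelX0 \<longleftrightarrow> s = None \<or> (\<exists>\<sigma>. s = Some \<sigma> \<and> Domain \<sigma> = UNIV)"
  by (auto simp: TRelX0_def)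

lemma total_Range: "Domain \<sigma> = UNIV \<Longrightarrow> Range \<sigma> \<noteq> {}"
  by (metis Domain_empty UNIV_not_empty Range_empty_iff)

lemma O_P_fix: "A \<noteq> {} \<Longrightarrow> r O graph (ef A) = r \<longleftrightarrow> Range r \<subseteq> A"
  by (rule O_graph_fix) (auto simp: efin effix)

lemma dot_cond_None: "dot_cond TRelX0 mult0 E None e (Some Id)"
  unfolding dot_cond_def using PE[of UNIV] P_UNIV by (auto simp: TRel_iff)

lemma dot_cond_SN: "dot_cond TRelX0 mult0 E (Some \<tau>) None None"
  unfolding dot_cond_def using E0 by (auto simp: TRel_iff)

lemma dot_cond_SP:
  fixes \<tau> :: "'a rel"
  assumes A: "A \<noteq> {}"
  defines "B \<equiv> {z. \<forall>y. (z,y) \<in> \<tau> \<longrightarrow> y \<in> A}"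
  shows "dot_cond TRelX0 mult0 E (Some \<tau>) (P A) (if B = {} then None else P B)"
  unfolding dot_cond_def
proof (intro conjI ballI)
  show "(if B = {} then None else P B) \<in> E" using E0 PE by auto
  fix s :: "'a rel option" assume s: "s \<in> TRelX0"
  show "mult0 (mult0 s (Some \<tau>)) (P A) = mult0 s (Some \<tau>) \<longleftrightarrow>
        mult0 s (if B = {} then None else P B) = s"
  proof (cases s)
    case (Some \<sigma>)
    hence tot: "Domain \<sigma> = UNIV" using s by (auto simp: TRel_iff)
    have "mult0 (mult0 s (Some \<tau>)) (P A) = mult0 s (Some \<tau>) \<longleftrightarrow> Range (\<sigma> O \<tau>) \<subseteq> A"
      using Some O_P_fix[OF A, of "\<sigma> O \<tau>"] by (simp add: P_def O_assoc)
    also have "\<dots> \<longleftrightarrow> Range \<sigma> \<subseteq> B" unfolding B_def by blast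
    also have "\<dots> \<longleftrightarrow> mult0 s (if B = {} then None else P B) = s"
      using Some O_P_fix[of B \<sigma>] total_Range[OF tot] by (auto simp: P_def)
    finally show ?thesis .
  qed simp
qed


lemma ef_idem: "A \<noteq> {} \<Longrightarrow> ef A \<circ> ef A = ef A"
  by (rule ext) (simp add: efin effix)

lemma E_idems: "E \<subseteq> idems TRelX0 mult0"
proof
  fix u assume u: "u \<in> E"
  show "u \<in> idems TRelX0 mult0"
  proof (rule E_cases2[OF u])
    fix A assume "A \<noteq> {}" "u = P A"
    thus ?thesis by (simp add: idems_def P_def TRel_iff graph_O_graph ef_idem)
  qed (simp add: idems_def TRel_iff)
qed

lemma dot_None: "e \<in> E \<Longrightarrow> dot TRelX0 mult0 E None e = Some Id"
  by (rule dot_unique[OF rpr E_idems dot_cond_None])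
lemma dot_SN: "dot TRelX0 mult0 E (Some \<tau>) None = None"
  by (rule dot_unique[OF rpr E_idems dot_cond_SN])
lemma dot_SP: "A \<noteq> {} \<Longrightarrow> dot TRelX0 mult0 E (Some \<tau>) (P A) =
   (if {z. \<forall>y. (z,y) \<in> \<tau> \<longrightarrow> y \<in> A} = {} then None else P {z. \<forall>y. (z,y) \<in> \<tau> \<longrightarrow> y \<in> A})"
  by (rule dot_unique[OF rpr E_idems dot_cond_SP])

lemma dots_exist: assumes t: "t \<in> TRelX0" and e: "e \<in> E"
  shows "\<exists>g. dot_cond TRelX0 mult0 E t e g"
proof (cases t)
  case None thus ?thesis using dot_cond_None by blast
next
  case (Some \<tau>)
  show ?thesis
  proof (rule E_cases2[OF e])
    assume "e = None" thus ?thesis using Some dot_cond_SN by blast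
  next
    fix A assume "A \<noteq> {}" "e = P A" thus ?thesis using Some dot_cond_SP by blast
  qed
qed

lemma I2: assumes s: "s \<in> TRelX0" and e: "e \<in> E" and f: "f \<in> E"
  and h: "mult0 s e = s" "mult0 s f = s"
  shows "mult0 s (meet mult0 E e f) = s"
proof (cases s)
  case None thus ?thesis by simp
next
  case (Some \<sigma>)
  hence tot: "Domain \<sigma> = UNIV" using s by (auto simp: TRel_iff)
  obtain A where A: "A \<noteq> {}" "e = P A" using e h(1) Some by (elim E_cases2) auto
  obtain B where B: "B \<noteq> {}" "f = P B" using f h(2) Some by (elim E_cases2) auto
  have "Range \<sigma> \<subseteq> A" using h Some A O_P_fix[OF A(1), of \<sigma>] by (simp add: P_def)
  moreover have "Range \<sigma> \<subseteq> B" using h Some B O_P_fix[OF B(1), of \<sigma>] by (simp add: P_def)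
  ultimately have AB: "A \<inter> B \<noteq> {}" "Range \<sigma> \<subseteq> A \<inter> B" using total_Range[OF tot] by auto
  show ?thesis using A B AB Some meet_PP O_P_fix[of "A \<inter> B" \<sigma>] by (simp add: P_def)
qed

lemma closed: "a \<in> TRelX0 \<Longrightarrow> b \<in> TRelX0 \<Longrightarrow> mult0 a b \<in> TRelX0"
  by (cases a; cases b) (auto simp: TRel_iff, blast)

lemma assoc0: "mult0 (mult0 a b) c = mult0 a (mult0 b c)"
  by (cases a; cases b; cases c) (auto simp: O_assoc)

lemma unit0: "mult0 (Some Id) a = a \<and> mult0 a (Some Id) = a" by (cases a) auto

lemma monoid: "is_monoid TRelX0 mult0 (Some Id)"
proof -
  have "Some Id \<in> TRelX0" by (simp add: TRel_iff)
  thus ?thesis by (simp add: is_monoid_def closed assoc0 unit0)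
qed

lemma zero0: "mult0 None s = None \<and> mult0 s None = None" by (cases s) auto

lemma integral: "integral_with_zero TRelX0 mult0 None"
  unfolding integral_with_zero_def using zero0
  by (auto simp: TRel_iff)

lemma ILE: "inductive_left_E_monoid TRelX0 mult0 (Some Id) E"
  unfolding inductive_left_E_monoid_def
  using monoid PE[of UNIV] P_UNIV E_idems rpr meets_exist dots_exist I2 by auto


definition phi :: "'a rel \<Rightarrow> 'a rel option \<times> 'a rel option" where
  "phi \<rho> = (if \<rho> = {} then (None, None) else (P (Domain \<rho>), Some (graph (ef (Domain \<rho>)) O \<rho>)))"

lemma Domain_ne: "Domain \<rho> \<noteq> {} \<longleftrightarrow> \<rho> \<noteq> {}" by auto

lemma GG: "A \<noteq> {} \<Longrightarrow> graph (ef A) O (graph (ef A) O r) = graph (ef A) O r"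
  by (simp add: O_assoc[symmetric] graph_O_graph ef_idem)

lemma phi_in: "phi \<rho> \<in> rest0 TRelX0 mult0 E None"
proof (cases "\<rho> = {}")
  case True thus ?thesis using E0 by (simp add: phi_def rest0_def TRel_iff)
next
  case False
  let ?A = "Domain \<rho>"
  have A: "?A \<noteq> {}" using False by auto
  have tot: "Domain (graph (ef ?A) O \<rho>) = UNIV"
  proof -
    { fix x have "ef ?A x \<in> ?A" using efin[OF A] .
      then obtain y where "(ef ?A x, y) \<in> \<rho>" by auto
      hence "x \<in> Domain (graph (ef ?A) O \<rho>)" by auto }
    thus ?thesis by auto
  qed
  show ?thesis using False A tot PE[OF A] GG[OF A]
    by (simp add: phi_def rest0_def TRel_iff P_def)
qed

lemma phi_fstE: "fst (phi \<rho>) \<in> E"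
  using phi_in[of \<rho>] by (cases "phi \<rho>") (auto simp: rest0_def)

lemma phi_inj: "inj phi"
proof (rule injI)
  fix \<rho> \<rho>' assume eq: "phi \<rho> = phi \<rho>'"
  show "\<rho> = \<rho>'"
  proof (cases "\<rho> = {}"; cases "\<rho>' = {}")
    assume "\<rho> \<noteq> {}" "\<rho>' \<noteq> {}"
    hence ne: "Domain \<rho> \<noteq> {}" "Domain \<rho>' \<noteq> {}" by auto
    hence D: "Domain \<rho> = Domain \<rho>'" using eq P_eq \<open>\<rho> \<noteq> {}\<close> \<open>\<rho>' \<noteq> {}\<close>
      by (simp add: phi_def)
    let ?A = "Domain \<rho>"
    have G: "graph (ef ?A) O \<rho> = graph (ef ?A) O \<rho>'"
      using eq D \<open>\<rho> \<noteq> {}\<close> \<open>\<rho>' \<noteq> {}\<close> by (simp add: phi_def)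
    show ?thesis
    proof (rule set_eqI, clarify)
      fix x y
      show "(x,y) \<in> \<rho> \<longleftrightarrow> (x,y) \<in> \<rho>'"
      proof
        assume h: "(x,y) \<in> \<rho>"
        hence "x \<in> ?A" by auto
        hence "ef ?A x = x" using effix ne by auto
        thus "(x,y) \<in> \<rho>'" using h G O_graph_mem by metis
      next
        assume h: "(x,y) \<in> \<rho>'"
        hence "x \<in> ?A" using D by auto
        hence "ef ?A x = x" using effix ne by auto
        thus "(x,y) \<in> \<rho>" using h G O_graph_mem by metis
      qed
    qed
  qed (use eq in \<open>auto simp: phi_def P_def split: if_splits\<close>)
qed

lemma phi_surj: "rest0 TRelX0 mult0 E None \<subseteq> range phi"
proof
  fix p assume p: "p \<in> rest0 TRelX0 mult0 E None"
  obtain e s where ps: "p = (e, s)" by fastforce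
  have e: "e \<in> E" and s: "s \<in> TRelX0" and es: "mult0 e s = s" and z: "s = None \<longrightarrow> e = None"
    using p ps by (auto simp: rest0_def)
  show "p \<in> range phi"
  proof (cases s)
    case None thus ?thesis using z ps by (auto simp: phi_def image_def intro!: exI[of _ "{}"])
  next
    case (Some \<sigma>)
    hence tot: "Domain \<sigma> = UNIV" using s by (auto simp: TRel_iff)
    obtain A where A: "A \<noteq> {}" "e = P A" using e es Some by (elim E_cases2) auto
    have fix\<sigma>: "graph (ef A) O \<sigma> = \<sigma>" using es A Some by (simp add: P_def)
    define \<rho> where "\<rho> = Id_on A O \<sigma>"
    have DA: "Domain \<rho> = A"
    proof
      show "Domain \<rho> \<subseteq> A" unfolding \<rho>_def by auto
      show "A \<subseteq> Domain \<rho>"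
      proof
        fix x assume x: "x \<in> A"
        obtain y where "(x,y) \<in> \<sigma>" using tot by blast
        thus "x \<in> Domain \<rho>" using x unfolding \<rho>_def by blast
      qed
    qed
    hence ne: "\<rho> \<noteq> {}" using A by auto
    have "graph (ef A) O \<rho> = graph (ef A) O \<sigma>"
      unfolding \<rho>_def using efin[OF A(1)] by (auto, blast)
    hence "phi \<rho> = p" using ne DA A ps Some fix\<sigma> by (simp add: phi_def)
    thus ?thesis by (metis rangeI)
  qed
qed

lemma phi_bij: "bij_betw phi UNIV (rest0 TRelX0 mult0 E None)"
  unfolding bij_betw_def using phi_inj phi_in phi_surj by auto

lemma phi_D: "phi (Dom_id \<rho>) = rest0_D (phi \<rho>)"
proof (cases "\<rho> = {}")
  case True thus ?thesis by (simp add: phi_def Dom_id_def rest0_D_def)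
next
  case False
  let ?A = "Domain \<rho>"
  have A: "?A \<noteq> {}" using False by auto
  have "graph (ef ?A) O Id_on ?A = graph (ef ?A)" using efin[OF A] by auto
  moreover have "Id_on ?A \<noteq> {}" using A by auto
  ultimately show ?thesis using False by (simp add: phi_def Dom_id_def rest0_D_def P_def)
qed


lemma demonic_empty1: "demonic {} \<tau> = {}" by (auto simp: demonic_def)
lemma demonic_empty2: "demonic \<rho> {} = {}" by (auto simp: demonic_def)

lemma phi_hom: "phi (demonic \<rho> \<tau>) = rest0_mult TRelX0 mult0 E (phi \<rho>) (phi \<tau>)"
proof (cases "\<rho> = {}")
  case True
  have "Some Id \<in> E" using PE[of UNIV] P_UNIV by simp
  thus ?thesis using True dot_None[OF phi_fstE[of \<tau>]] meet_None1 zero0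
    by (simp add: demonic_empty1 rest0_mult_def Let_def phi_def)
next
  case rne: False
  let ?A = "Domain \<rho>"
  have A: "?A \<noteq> {}" using rne by auto
  let ?\<sigma> = "graph (ef ?A) O \<rho>"
  have phr: "phi \<rho> = (P ?A, Some ?\<sigma>)" using rne by (simp add: phi_def)
  show ?thesis
  proof (cases "\<tau> = {}")
    case True
    thus ?thesis using phr dot_SN meet_None2[OF PE[OF A]] zero0
      by (simp add: demonic_empty2 rest0_mult_def Let_def phi_def)
  next
    case tne: False
    let ?B = "Domain \<tau>"
    have B: "?B \<noteq> {}" using tne by auto
    have pht: "phi \<tau> = (P ?B, Some (graph (ef ?B) O \<tau>))" using tne by (simp add: phi_def)
    define B' where "B' = {z. \<forall>y. (z,y) \<in> ?\<sigma> \<longrightarrow> y \<in> ?B}"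
    define C where "C = {x \<in> ?A. \<forall>y. (x,y) \<in> \<rho> \<longrightarrow> y \<in> ?B}"
    have efA: "\<And>x. x \<in> ?A \<Longrightarrow> ef ?A x = x" using effix[OF A] .
    have AB': "?A \<inter> B' = C" unfolding B'_def C_def using efA by (auto; metis DomainI)
    have DC: "Domain (demonic \<rho> \<tau>) = C"
    proof
      show "Domain (demonic \<rho> \<tau>) \<subseteq> C" unfolding C_def demonic_def by auto
      show "C \<subseteq> Domain (demonic \<rho> \<tau>)"
      proof
        fix x assume x: "x \<in> C"
        then obtain y where y: "(x,y) \<in> \<rho>" unfolding C_def by auto
        hence "y \<in> ?B" using x unfolding C_def by auto
        then obtain w where "(y,w) \<in> \<tau>" by auto
        hence "(x,w) \<in> demonic \<rho> \<tau>" using y x unfolding demonic_def C_def by auto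
        thus "x \<in> Domain (demonic \<rho> \<tau>)" by auto
      qed
    qed
    have dt: "dot TRelX0 mult0 E (Some ?\<sigma>) (P ?B) = (if B' = {} then None else P B')"
      using dot_SP[OF B] unfolding B'_def .
    have mt: "meet mult0 E (P ?A) (if B' = {} then None else P B') = (if C = {} then None else P C)"
      using meet_None2[OF PE[OF A]] meet_PP[OF A] AB' by auto
    have rhs: "rest0_mult TRelX0 mult0 E (phi \<rho>) (phi \<tau>) =
      (let g = (if C = {} then None else P C) in
        (g, mult0 (mult0 g (Some ?\<sigma>)) (Some (graph (ef ?B) O \<tau>))))"
      using phr pht dt mt by (simp add: rest0_mult_def)
    show ?thesis
    proof (cases "C = {}")
      case True
      hence "demonic \<rho> \<tau> = {}" using DC by auto
      thus ?thesis using rhs True by (simp add: phi_def)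
    next
      case Cne: False
      have dne: "demonic \<rho> \<tau> \<noteq> {}" using DC Cne by auto
      have CA: "C \<subseteq> ?A" unfolding C_def by auto
      have eq: "graph (ef C) O ?\<sigma> O graph (ef ?B) O \<tau> = graph (ef C) O demonic \<rho> \<tau>"
      proof (rule set_eqI, clarify)
        fix x w
        let ?c = "ef C x"
        have c: "?c \<in> C" using efin[OF Cne] .
        hence cA: "ef ?A ?c = ?c" using CA efA by auto
        have cB: "\<And>y. (?c,y) \<in> \<rho> \<Longrightarrow> ef ?B y = y" using c effix[OF B] unfolding C_def by auto
        have "(x,w) \<in> graph (ef C) O ?\<sigma> O graph (ef ?B) O \<tau> \<longleftrightarrow>
              (\<exists>y. (?c,y) \<in> \<rho> \<and> (ef ?B y, w) \<in> \<tau>)" using cA by auto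
        also have "\<dots> \<longleftrightarrow> (\<exists>y. (?c,y) \<in> \<rho> \<and> (y, w) \<in> \<tau>)" using cB by metis
        also have "\<dots> \<longleftrightarrow> (?c, w) \<in> demonic \<rho> \<tau>"
          using c unfolding demonic_def C_def by auto
        also have "\<dots> \<longleftrightarrow> (x,w) \<in> graph (ef C) O demonic \<rho> \<tau>" by simp
        finally show "(x,w) \<in> graph (ef C) O ?\<sigma> O graph (ef ?B) O \<tau> \<longleftrightarrow>
              (x,w) \<in> graph (ef C) O demonic \<rho> \<tau>" .
      qed
      show ?thesis using rhs Cne dne DC eq by (simp add: phi_def P_def O_assoc)
    qed
  qed
qed

end

lemma graph_eq_iff: "graph f = graph g \<longleftrightarrow> f = g" using graph_inj by blast

lemma idems_TX0: "u \<in> idems TX0 mult0 \<longleftrightarrow> u = None \<or> (\<exists>h. u = Some (graph h) \<and> h \<circ> h = h)"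
  by (auto simp: idems_def TX0_def graph_O_graph graph_eq_iff)

lemma le_r_graph:
  assumes "k \<circ> k = k"
  shows "le_r mult0 (Some (graph h)) (Some (graph k)) \<longleftrightarrow> range h \<subseteq> range k"
proof -
  have "le_r mult0 (Some (graph h)) (Some (graph k)) \<longleftrightarrow> h = k \<circ> h"
    by (auto simp: le_r_def graph_O_graph dest: graph_inj)
  also have "\<dots> \<longleftrightarrow> range h \<subseteq> range k"
  proof
    assume "h = k \<circ> h" thus "range h \<subseteq> range k" by (metis fun.set_map image_subsetI rangeI)
  next
    assume r: "range h \<subseteq> range k"
    show "h = k \<circ> h"
    proof
      fix x obtain y where "h x = k y" using r by blast
      thus "h x = (k \<circ> h) x" using assms by (metis comp_apply)
    qed
  qed
  finally show ?thesis .
qed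

lemma sim_r_graph:
  "h \<circ> h = h \<Longrightarrow> k \<circ> k = k \<Longrightarrow>
   sim_r mult0 (Some (graph h)) (Some (graph k)) \<longleftrightarrow> range h = range k"
  unfolding sim_r_def by (auto simp: le_r_graph)

lemma sim_r_None: "sim_r mult0 (Some a) None \<longleftrightarrow> False" "sim_r mult0 None (Some a) \<longleftrightarrow> False"
  by (auto simp: sim_r_def le_r_def)

lemma ex1_uniq: "\<exists>!x. P x \<Longrightarrow> P a \<Longrightarrow> P b \<Longrightarrow> a = b" by blast

lemma EL_from_max:
  fixes E :: "'a rel option set"
  assumes mx: "max_right_pre_reduced (TX0 :: 'a rel option set) mult0 E"
  shows "\<exists>ef. EL E ef"
proof -
  have sub: "E \<subseteq> idems TX0 mult0" and uq: "\<And>e. e \<in> idems TX0 mult0 \<Longrightarrow> \<exists>!f. f \<in> E \<and> sim_r mult0 e f"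
    using mx by (auto simp: max_right_pre_reduced_def)
  have Eidem: "f \<circ> f = f" if "Some (graph f) \<in> E" for f
  proof -
    have "Some (graph f) \<in> idems TX0 mult0" using sub that by blast
    thus ?thesis by (auto simp: idems_TX0 graph_eq_iff)
  qed
  have ex1: "\<exists>!f. Some (graph f) \<in> E \<and> range f = A" if A: "A \<noteq> {}" for A
  proof -
    define fA where "fA = (\<lambda>x. if x \<in> A then x else (SOME a. a \<in> A))"
    have sA: "(SOME a. a \<in> A) \<in> A" using A by (simp add: some_in_eq)
    have fAi: "fA \<circ> fA = fA" using sA by (auto simp: fA_def)
    have fAr: "range fA = A" using sA by (auto simp: fA_def image_def)
    have ii: "Some (graph fA) \<in> idems TX0 mult0" using fAi unfolding idems_TX0 by blast
    obtain g where g: "g \<in> E" "sim_r mult0 (Some (graph fA)) g" using uq[OF ii] by blast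
    have gi: "g \<in> idems TX0 mult0" using g sub by blast
    have "g \<noteq> None" using g(2) sim_r_None(1) by metis
    then obtain h where h: "g = Some (graph h)" "h \<circ> h = h"
      using gi unfolding idems_TX0 by blast
    have "sim_r mult0 (Some (graph fA)) (Some (graph h))" using g h by simp
    hence hr: "range h = A" using sim_r_graph[OF fAi h(2)] fAr by simp
    show ?thesis
    proof (rule ex1I[of _ h])
      show "Some (graph h) \<in> E \<and> range h = A" using g h hr by simp
      fix f assume f: "Some (graph f) \<in> E \<and> range f = A"
      have Ef: "f \<circ> f = f" using Eidem f by blast
      have "range fA = range f" using f fAr by simp
      hence "sim_r mult0 (Some (graph fA)) (Some (graph f))"
        using sim_r_graph[OF fAi Ef] by blast
      hence "Some (graph f) = g" using ex1_uniq[OF uq[OF ii]] g f by blast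
      thus "f = h" using h by (auto dest: graph_inj)
    qed
  qed
  define ef where "ef = (\<lambda>A. THE f. Some (graph f) \<in> E \<and> range f = A)"
  have efp: "Some (graph (ef A)) \<in> E \<and> range (ef A) = A" if "A \<noteq> {}" for A
    unfolding ef_def using theI'[OF ex1[OF that]] by simp
  have efu: "ef A = h" if "A \<noteq> {}" "Some (graph h) \<in> E" "range h = A" for A h
    unfolding ef_def by (rule the1_equality[OF ex1[OF that(1)]]) (use that in simp)
  have "EL E ef"
  proof
    have ni: "None \<in> idems TX0 mult0" by (simp add: idems_TX0)
    then obtain f where "f \<in> E" "sim_r mult0 None f" using uq by blast
    thus "None \<in> E" by (cases f) (auto simp: sim_r_None)
  next
    fix A :: "'a set" assume "A \<noteq> {}" thus "Some (graph (ef A)) \<in> E" using efp by blast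
  next
    fix A :: "'a set" and x assume "A \<noteq> {}" thus "ef A x \<in> A" using efp by blast
  next
    fix A :: "'a set" and x assume A: "A \<noteq> {}" and x: "x \<in> A"
    have r: "range (ef A) = A" using efp[OF A] by (rule conjunct2)
    have i: "ef A \<circ> ef A = ef A" using efp[OF A] by (intro Eidem) (rule conjunct1)
    from x r have "x \<in> range (ef A)" by simp
    then obtain y where y: "x = ef A y" by blast
    have "ef A (ef A y) = ef A y" using i by (metis comp_apply)
    thus "ef A x = x" using y by simp
  next
    fix u assume u: "u \<in> E"
    show "u = None \<or> (\<exists>A. A \<noteq> {} \<and> u = Some (graph (ef A)))"
    proof (cases u)
      case (Some a)
      have "u \<in> idems TX0 mult0" using u sub by blast
      then obtain h where h: "u = Some (graph h)" "h \<circ> h = h" using Some unfolding idems_TX0 by blast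
      have ne: "range h \<noteq> {}" by simp
      have "ef (range h) = h" using efu[OF ne] u h by simp
      thus ?thesis using h ne by metis
    qed simp
  qed
  thus ?thesis by blast
qed

theorem theorem7p6:
  fixes E :: "'a rel option set"
  assumes "max_right_pre_reduced (TX0 :: 'a rel option set) mult0 E"
  shows "inductive_left_E_monoid TRelX0 mult0 (Some Id) E
     \<and> integral_with_zero TRelX0 mult0 None \<and> None \<in> E
     \<and> (\<exists>\<phi> :: 'a rel \<Rightarrow> 'a rel option \<times> 'a rel option.
          bij_betw \<phi> UNIV (rest0 TRelX0 mult0 E None)
          \<and> (\<forall>\<rho> \<tau>. \<phi> (demonic \<rho> \<tau>) = rest0_mult TRelX0 mult0 E (\<phi> \<rho>) (\<phi> \<tau>))
          \<and> (\<forall>\<rho>. \<phi> (Dom_id \<rho>) = rest0_D (\<phi> \<rho>)))"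
proof -
  obtain ef where "EL E ef" using EL_from_max[OF assms] by blast
  then interpret EL E ef .
  have "\<exists>\<phi> :: 'a rel \<Rightarrow> 'a rel option \<times> 'a rel option.
          bij_betw \<phi> UNIV (rest0 TRelX0 mult0 E None)
          \<and> (\<forall>\<rho> \<tau>. \<phi> (demonic \<rho> \<tau>) = rest0_mult TRelX0 mult0 E (\<phi> \<rho>) (\<phi> \<tau>))
          \<and> (\<forall>\<rho>. \<phi> (Dom_id \<rho>) = rest0_D (\<phi> \<rho>))"
    by (rule exI[of _ phi]) (simp add: phi_bij phi_hom phi_D)
  thus ?thesis using ILE integral E0 by blast
qed

end
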